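(* Let $r\ge 2$ and $m$ be integers with $0\le 2m\le r$, $n=2r-4m$, and let $f:S^2(S^r(\mathbb{C}^2))\to S^{n}(\mathbb{C}^2)$ be an $\mathfrak{sl}_2(\mathbb{C})$-equivariant linear map, written $f=\sum_{k=0}^n q_k w_k$, each $q_k$ viewed as a symmetric bilinear form on $S^r(\mathbb{C}^2)$. Then for every $0\le k\le n/2$, $$\mathrm{rk}(q_k)=\mathrm{rk}(q_{n-k})\le 2m+k+1.$$
   Context: $\mathfrak{sl}_2(\mathbb{C})$ has basis $X=\begin{pmatrix}0&1\\0&0\end{pmatrix}$, $H=\begin{pmatrix}1&0\\0&-1\end{pmatrix}$, $Y=\begin{pmatrix}0&0\\1&0\end{pmatrix}$, acting on the irreducible modules $S^d(\mathbb{C}^2)$. Let $w_0\in S^n(\mathbb{C}^2)$ be a highest weight vector and $w_k=Y^kw_0/k!$ ($0\le k\le n$). Writing $f=\sum_{k=0}^n q_kw_k$ means $f(u)=\sum_k q_k(u)w_k$ for linear forms $q_k$ on $S^2(S^r(\mathbb{C}^2))$, equivalently symmetric bilinear forms $(u,v)\mapsto q_k(uv)$ on $S^r(\mathbb{C}^2)$; $\mathrm{rk}$ denotes the rank of the bilinear form. *)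

theory Defs
  imports "HOL-Analysis.Analysis" "Jordan_Normal_Form.DL_Rank"
begin

text \<open>Model of S^d(C^2): a vector is a coefficient function v :: nat => complex,
  where v i is the coefficient of the monomial x^(d-i) y^i (0 <= i <= d),
  and v i = 0 for i > d.  The sl_2 action is by the derivations
  X = x d/dy, H = x d/dx - y d/dy, Y = y d/dx.\<close>

definition symp :: "nat \<Rightarrow> (nat \<Rightarrow> complex) set" where
  "symp d = {v. \<forall>i>d. v i = 0}"

definition actX :: "nat \<Rightarrow> (nat \<Rightarrow> complex) \<Rightarrow> (nat \<Rightarrow> complex)" where
  "actX d v = (\<lambda>i. if i < d then of_nat (i + 1) * v (i + 1) else 0)"

definition actH :: "nat \<Rightarrow> (nat \<Rightarrow> complex) \<Rightarrow> (nat \<Rightarrow> complex)" where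
  "actH d v = (\<lambda>i. if i \<le> d then (of_nat d - 2 * of_nat i) * v i else 0)"

definition actY :: "nat \<Rightarrow> (nat \<Rightarrow> complex) \<Rightarrow> (nat \<Rightarrow> complex)" where
  "actY d v = (\<lambda>i. if 1 \<le> i \<and> i \<le> d then of_nat (d + 1 - i) * v (i - 1) else 0)"

definition ebasis :: "nat \<Rightarrow> (nat \<Rightarrow> complex)" where
  "ebasis i = (\<lambda>j. if j = i then 1 else 0)"

definition highest_weight_vector :: "nat \<Rightarrow> (nat \<Rightarrow> complex) \<Rightarrow> bool" where
  "highest_weight_vector d w \<longleftrightarrow> w \<in> symp d \<and> w \<noteq> (\<lambda>_. 0) \<and> actX d w = (\<lambda>_. 0)"

definition wvec :: "nat \<Rightarrow> (nat \<Rightarrow> complex) \<Rightarrow> nat \<Rightarrow> (nat \<Rightarrow> complex)" where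
  "wvec d w0 k = (\<lambda>i. ((actY d ^^ k) w0) i / of_nat (fact k))"

text \<open>A linear map f : S^2(S^r(C^2)) -> S^n(C^2) is given by the symmetric
  bilinear map B(u,v) = f(uv) on S^r(C^2).  It is sl_2-equivariant iff
  g.B(u,v) = B(g.u,v) + B(u,g.v) for g in {X,H,Y}.\<close>
definition equivariant_sym_bilinear ::
  "nat \<Rightarrow> nat \<Rightarrow> ((nat \<Rightarrow> complex) \<Rightarrow> (nat \<Rightarrow> complex) \<Rightarrow> (nat \<Rightarrow> complex)) \<Rightarrow> bool" where
  "equivariant_sym_bilinear r n B \<longleftrightarrow>
     (\<forall>u\<in>symp r. \<forall>v\<in>symp r. B u v \<in> symp n \<and> B u v = B v u) \<and>
     (\<forall>a b. \<forall>u\<in>symp r. \<forall>u'\<in>symp r. \<forall>v\<in>symp r.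
        B (\<lambda>i. a * u i + b * u' i) v = (\<lambda>i. a * B u v i + b * B u' v i)) \<and>
     (\<forall>u\<in>symp r. \<forall>v\<in>symp r.
        actX n (B u v) = (\<lambda>i. B (actX r u) v i + B u (actX r v) i) \<and>
        actH n (B u v) = (\<lambda>i. B (actH r u) v i + B u (actH r v) i) \<and>
        actY n (B u v) = (\<lambda>i. B (actY r u) v i + B u (actY r v) i))"

definition bilin_rank :: "nat \<Rightarrow> ((nat \<Rightarrow> complex) \<Rightarrow> (nat \<Rightarrow> complex) \<Rightarrow> complex) \<Rightarrow> nat" where
  "bilin_rank r q = vec_space.rank (r + 1)
      (mat (r + 1) (r + 1) (\<lambda>(i, j). q (ebasis i) (ebasis j)))"

end

theory Submission
  imports Defs
begin


lemma (in vec_space) rank_sparse: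
  fixes A :: "'a mat"
  assumes A: "A \<in> carrier_mat n n"
  and row1: "\<And>i j j'. i<n \<Longrightarrow> j<n \<Longrightarrow> j'<n \<Longrightarrow> A$$(i,j) \<noteq> 0 \<Longrightarrow> A$$(i,j') \<noteq> 0 \<Longrightarrow> j = j'"
  shows "rank A = card {j. j<n \<and> (\<exists>i<n. A$$(i,j) \<noteq> 0)}"
proof -
  define J where "J = {j. j<n \<and> (\<exists>i<n. A$$(i,j) \<noteq> 0)}"
  define p where "p j = (SOME i. i<n \<and> A$$(i,j) \<noteq> 0)" for j
  have p: "p j < n" "A$$(p j, j) \<noteq> 0" if "j \<in> J" for j
    using someI_ex[of "\<lambda>i. i<n \<and> A$$(i,j) \<noteq> 0"] that unfolding J_def p_def by auto
  have colj: "col A j $ i = A$$(i,j)" if "j < n" "i < n" for i j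
    using A that by auto
  have Jn: "j < n" if "j \<in> J" for j using that J_def by auto
  have other: "col A j' $ p j = 0" if "j \<in> J" "j' \<in> J" "j' \<noteq> j" for j j'
    using row1[of "p j" j j'] p[OF that(1)] colj Jn that by auto
  have inj: "inj_on (col A) J"
  proof (rule inj_onI)
    fix j j' assume a: "j \<in> J" "j' \<in> J" "col A j = col A j'"
    show "j = j'"
    proof (rule ccontr)
      assume "j \<noteq> j'"
      hence z: "col A j' $ p j = 0" using other a by auto
      have "col A j $ p j = A$$(p j, j)" using colj[of j "p j"] Jn[OF a(1)] p[OF a(1)] by auto
      thus False using a(3) z p[OF a(1)] by auto
    qed
  qed
  define U where "U = col A ` J"
  have finU: "finite U" unfolding U_def J_def by auto
  have Uc: "U \<subseteq> carrier_vec n" unfolding U_def using A Jn by auto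
  have Ucols: "U \<subseteq> set (cols A)" unfolding U_def using A Jn by (auto simp: cols_def)
  have indU: "lin_indpt U"
  proof (rule finite_lin_indpt2[OF finU])
    show "U \<subseteq> carrier_vec n" using Uc by simp
    fix a assume "True" and lc: "lincomb a U = 0\<^sub>v n"
    show "\<forall>v\<in>U. a v = 0"
    proof
      fix v assume "v \<in> U"
      then obtain j where j: "j \<in> J" "v = col A j" unfolding U_def by auto
      have "lincomb a U $ p j = (\<Sum>x\<in>U. a x * x $ p j)"
        using lincomb_index[OF p(1)[OF j(1)] Uc] .
      also have "\<dots> = a v * v $ p j"
      proof (rule sum.remove[OF finU \<open>v \<in> U\<close>, THEN trans])
        have "(\<Sum>x\<in>U - {v}. a x * x $ p j) = 0"
        proof (rule sum.neutral, rule ballI)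
          fix x assume "x \<in> U - {v}"
          then obtain j' where "j' \<in> J" "x = col A j'" "j' \<noteq> j" using j unfolding U_def by auto
          thus "a x * x $ p j = 0" using other[OF j(1)] by auto
        qed
        thus "a v * v $ p j + (\<Sum>x\<in>U - {v}. a x * x $ p j) = a v * v $ p j" by simp
      qed
      finally have "a v * v $ p j = 0" using lc p(1)[OF j(1)] by simp
      moreover have "v $ p j \<noteq> 0" using j p colj Jn by auto
      ultimately show "a v = 0" by simp
    qed
  qed
  have maxU: "maximal U (\<lambda>T. T \<subseteq> set (cols A) \<and> lin_indpt T)"
    unfolding maximal_def
  proof (intro conjI allI impI)
    show "U \<subseteq> set (cols A)" by fact
    show "lin_indpt U" by fact
    fix T assume T: "U \<subseteq> T \<and> T \<subseteq> set (cols A) \<and> lin_indpt T"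
    have Tc: "T \<subseteq> carrier_vec n" using T A cols_dim by blast
    have ne: "(UNIV::'a set) \<noteq> {0}" by (metis UNIV_I singletonD zero_neq_one)
    have z: "0\<^sub>v n \<notin> T" using zero_nin_lin_indpt[OF Tc] T ne by auto
    show "T = U"
    proof
      show "T \<subseteq> U"
      proof
        fix v assume "v \<in> T"
        then obtain j where j: "j < n" "v = col A j" using T A by (auto simp: cols_def)
        have "v \<noteq> 0\<^sub>v n" using z \<open>v \<in> T\<close> by auto
        then obtain i where "i < n" "v $ i \<noteq> 0" using j A by (auto simp: vec_eq_iff)
        hence "j \<in> J" using j colj unfolding J_def by auto
        thus "v \<in> U" using j U_def by auto
      qed
    qed (use T in auto)
  qed
  have "rank A = card U" using rank_card_indpt[OF A maxU] .
  also have "\<dots> = card J" unfolding U_def using card_image[OF inj] .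
  finally show ?thesis unfolding J_def .
qed



locale eqv =
  fixes r m n :: nat and B :: "(nat \<Rightarrow> complex) \<Rightarrow> (nat \<Rightarrow> complex) \<Rightarrow> (nat \<Rightarrow> complex)"
  assumes rm: "2*m \<le> r" and nn: "n = 2*r - 4*m" and eqv: "equivariant_sym_bilinear r n B"
begin

lemma Bsym: "u \<in> symp r \<Longrightarrow> v \<in> symp r \<Longrightarrow> B u v = B v u"
  using eqv unfolding equivariant_sym_bilinear_def by auto
lemma Bsymp: "u \<in> symp r \<Longrightarrow> v \<in> symp r \<Longrightarrow> B u v \<in> symp n"
  using eqv unfolding equivariant_sym_bilinear_def by auto
lemma Blin: "u \<in> symp r \<Longrightarrow> u' \<in> symp r \<Longrightarrow> v \<in> symp r \<Longrightarrow>
   B (\<lambda>i. x * u i + y * u' i) v = (\<lambda>i. x * B u v i + y * B u' v i)"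
  using eqv unfolding equivariant_sym_bilinear_def by auto
lemma BX: "u \<in> symp r \<Longrightarrow> v \<in> symp r \<Longrightarrow> actX n (B u v) = (\<lambda>i. B (actX r u) v i + B u (actX r v) i)"
  using eqv unfolding equivariant_sym_bilinear_def by auto
lemma BH: "u \<in> symp r \<Longrightarrow> v \<in> symp r \<Longrightarrow> actH n (B u v) = (\<lambda>i. B (actH r u) v i + B u (actH r v) i)"
  using eqv unfolding equivariant_sym_bilinear_def by auto
lemma BY: "u \<in> symp r \<Longrightarrow> v \<in> symp r \<Longrightarrow> actY n (B u v) = (\<lambda>i. B (actY r u) v i + B u (actY r v) i)"
  using eqv unfolding equivariant_sym_bilinear_def by auto

lemma eb: "a \<le> r \<Longrightarrow> ebasis a \<in> symp r"
  unfolding symp_def ebasis_def by auto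

lemma scsymp: "u \<in> symp r \<Longrightarrow> (\<lambda>i. x * u i) \<in> symp r"
  unfolding symp_def by auto

lemma Bsc1: "u \<in> symp r \<Longrightarrow> v \<in> symp r \<Longrightarrow> B (\<lambda>i. x * u i) v = (\<lambda>i. x * B u v i)"
  using Blin[of u u v x 0] by simp

lemma Bsc2: "u \<in> symp r \<Longrightarrow> v \<in> symp r \<Longrightarrow> B u (\<lambda>i. x * v i) = (\<lambda>i. x * B u v i)"
  using Bsc1[of v u x] Bsym[of u "\<lambda>i. x * v i"] Bsym[of u v] scsymp[of v x] by simp

lemma B0: "v \<in> symp r \<Longrightarrow> B (\<lambda>i. 0) v = (\<lambda>i. 0)"
  using Bsc1[of "ebasis 0" v 0] eb[of 0] by simp

lemma Hb: "a \<le> r \<Longrightarrow> actH r (ebasis a) = (\<lambda>i. (of_nat r - 2* of_nat a) * ebasis a i)"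
  unfolding actH_def ebasis_def by auto

lemma Xb: "a \<le> r \<Longrightarrow> actX r (ebasis a) = (\<lambda>i. of_nat a * ebasis (a-1) i)"
  unfolding actX_def ebasis_def by (rule ext) auto

lemma Yb: "a < r \<Longrightarrow> actY r (ebasis a) = (\<lambda>i. of_nat (r-a) * ebasis (a+1) i)"
  unfolding actY_def ebasis_def by (rule ext) (auto simp: of_nat_diff)

lemma Yr: "actY r (ebasis r) = (\<lambda>i. 0)"
  unfolding actY_def ebasis_def by (rule ext) auto

definition bb :: "nat \<Rightarrow> nat \<Rightarrow> nat \<Rightarrow> complex" where
  "bb a c i = (if a \<le> r \<and> c \<le> r then B (ebasis a) (ebasis c) i else 0)"

lemma BYb: assumes "a \<le> r" "c \<le> r" shows "B (actY r (ebasis a)) (ebasis c) i = of_nat (r-a) * bb (a+1) c i"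
proof (cases "a < r")
  case True
  thus ?thesis using Yb[OF True] Bsc1[of "ebasis (a+1)" "ebasis c"] eb[of "a+1"] eb[of c] assms
    by (simp add: bb_def of_nat_diff)
next
  case False
  from assms have "a = r" using False by simp
  thus ?thesis using Yr B0[OF eb[of c]] \<open>c \<le> r\<close> by simp
qed

lemma EH:
  assumes "a \<le> r" "c \<le> r" "bb a c i \<noteq> 0"
  shows "i \<le> n \<and> a + c = i + 2*m"
proof -
  have ea: "ebasis a \<in> symp r" and ec: "ebasis c \<in> symp r" using eb assms by auto
  have b: "bb a c i = B (ebasis a) (ebasis c) i" using assms by (simp add: bb_def)
  have "i \<le> n"
  proof (rule ccontr)
    assume "\<not> i \<le> n"
    thus False using Bsymp[OF ea ec] assms b unfolding symp_def by auto
  qed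
  have "actH n (B (ebasis a) (ebasis c)) i = B (actH r (ebasis a)) (ebasis c) i + B (ebasis a) (actH r (ebasis c)) i"
    using BH[OF ea ec] by metis
  also have "\<dots> = (of_nat r - 2* of_nat a) * bb a c i + (of_nat r - 2* of_nat c) * bb a c i"
    using Hb[OF assms(1)] Hb[OF assms(2)] Bsc1[OF ea ec] Bsc2[OF ea ec] b by simp
  finally have "(of_nat n - 2 * of_nat i) * bb a c i = (of_nat r - 2* of_nat a) * bb a c i + (of_nat r - 2* of_nat c) * bb a c i"
    using \<open>i \<le> n\<close> b by (simp add: actH_def)
  hence "(of_nat n - 2 * of_nat i :: complex) = (of_nat r - 2* of_nat a) + (of_nat r - 2* of_nat c)"
    using assms(3) by (metis distrib_right mult_cancel_right)
  hence "(of_nat (n + 2*a + 2*c) :: complex) = of_nat (2*r + 2*i)"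
    by (simp add: algebra_simps)
  hence "n + 2*a + 2*c = 2*r + 2*i" using of_nat_eq_iff by blast
  thus ?thesis using \<open>i \<le> n\<close> nn rm by auto
qed

lemma EX:
  assumes "a \<le> r" "c \<le> r"
  shows "(if i < n then of_nat (i+1) * bb a c (i+1) else 0) = of_nat a * bb (a-1) c i + of_nat c * bb a (c-1) i"
proof -
  have ea: "ebasis a \<in> symp r" and ec: "ebasis c \<in> symp r" using eb assms by auto
  have ea': "ebasis (a-1) \<in> symp r" and ec': "ebasis (c-1) \<in> symp r" using eb assms by auto
  have "actX n (B (ebasis a) (ebasis c)) i = B (actX r (ebasis a)) (ebasis c) i + B (ebasis a) (actX r (ebasis c)) i"
    using BX[OF ea ec] by metis
  also have "\<dots> = of_nat a * bb (a-1) c i + of_nat c * bb a (c-1) i"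
    using Xb[OF assms(1)] Xb[OF assms(2)] Bsc1[OF ea' ec] Bsc2[OF ea ec'] assms by (simp add: bb_def le_diff_iff' order.trans[OF diff_le_self])
  finally have e: "actX n (B (ebasis a) (ebasis c)) i = of_nat a * bb (a-1) c i + of_nat c * bb a (c-1) i" .
  have "actX n (B (ebasis a) (ebasis c)) i = (if i < n then of_nat (i+1) * bb a c (i+1) else 0)"
    using assms by (simp add: actX_def bb_def)
  thus ?thesis using e by simp
qed

lemma EY:
  assumes "a \<le> r" "c \<le> r"
  shows "(if 1 \<le> i \<and> i \<le> n then of_nat (n+1-i) * bb a c (i-1) else 0) = of_nat (r-a) * bb (a+1) c i + of_nat (r-c) * bb a (c+1) i"
proof -
  have ea: "ebasis a \<in> symp r" and ec: "ebasis c \<in> symp r" using eb assms by auto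
  have "actY n (B (ebasis a) (ebasis c)) i = B (actY r (ebasis a)) (ebasis c) i + B (ebasis a) (actY r (ebasis c)) i"
    using BY[OF ea ec] by metis
  also have "B (ebasis a) (actY r (ebasis c)) i = B (actY r (ebasis c)) (ebasis a) i"
  proof -
    have "actY r (ebasis c) \<in> symp r" unfolding actY_def symp_def by auto
    thus ?thesis using Bsym ea by metis
  qed
  also have "B (actY r (ebasis c)) (ebasis a) i = of_nat (r-c) * bb (c+1) a i"
    using BYb assms by blast
  also have "bb (c+1) a i = bb a (c+1) i"
    unfolding bb_def using Bsym eb assms by auto
  finally have e: "actY n (B (ebasis a) (ebasis c)) i = of_nat (r-a) * bb (a+1) c i + of_nat (r-c) * bb a (c+1) i"
    using BYb[OF assms] by simp
  have "actY n (B (ebasis a) (ebasis c)) i = (if 1 \<le> i \<and> i \<le> n then of_nat (n+1-i) * bb a c (i-1) else 0)"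
    using assms by (simp add: actY_def bb_def)
  thus ?thesis using e by simp
qed

end


definition RXp :: "nat \<Rightarrow> nat \<Rightarrow> nat \<Rightarrow> (nat\<Rightarrow>nat\<Rightarrow>complex) \<Rightarrow> bool" where
"RXp r m n t \<longleftrightarrow> (\<forall>a c. a \<le> r \<longrightarrow> c \<le> r \<longrightarrow> 2*m+1 \<le> a+c \<longrightarrow> a+c \<le> 2*m+n \<longrightarrow>
    of_nat (a+c-2*m) * t a c = of_nat a * t (a-1) c + of_nat c * t a (c-1))"

definition R0p :: "nat \<Rightarrow> nat \<Rightarrow> (nat\<Rightarrow>nat\<Rightarrow>complex) \<Rightarrow> bool" where
"R0p r m t \<longleftrightarrow> (\<forall>a. a < 2*m \<longrightarrow> of_nat (r-a) * t (a+1) (2*m-1-a) + of_nat (r-(2*m-1-a)) * t a (2*m-a) = 0)"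

lemma RXp_lin: assumes "RXp r m n t" "RXp r m n t'" shows "RXp r m n (\<lambda>a c. x * t a c - y * t' a c)"
  unfolding RXp_def
proof (intro allI impI)
  fix a c assume h: "a \<le> r" "c \<le> r" "2*m+1 \<le> a+c" "a+c \<le> 2*m+n"
  have e1: "of_nat (a+c-2*m) * t a c = of_nat a * t (a-1) c + of_nat c * t a (c-1)"
    using assms(1) h unfolding RXp_def by blast
  have e2: "of_nat (a+c-2*m) * t' a c = of_nat a * t' (a-1) c + of_nat c * t' a (c-1)"
    using assms(2) h unfolding RXp_def by blast
  have "of_nat (a+c-2*m) * (x * t a c - y * t' a c) = x * (of_nat (a+c-2*m) * t a c) - y * (of_nat (a+c-2*m) * t' a c)"
    by (simp add: algebra_simps)
  also have "\<dots> = of_nat a * (x * t (a-1) c - y * t' (a-1) c) + of_nat c * (x * t a (c-1) - y * t' a (c-1))"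
    unfolding e1 e2 by (simp add: algebra_simps)
  finally show "of_nat (a+c-2*m) * (x * t a c - y * t' a c) = of_nat a * (x * t (a-1) c - y * t' (a-1) c) + of_nat c * (x * t a (c-1) - y * t' a (c-1))" .
qed

lemma R0p_lin: assumes "R0p r m t" "R0p r m t'" shows "R0p r m (\<lambda>a c. x * t a c - y * t' a c)"
  unfolding R0p_def
proof (intro allI impI)
  fix a assume h: "a < 2*m"
  have e1: "of_nat (r-a) * t (a+1) (2*m-1-a) + of_nat (r-(2*m-1-a)) * t a (2*m-a) = 0"
    using assms(1) h unfolding R0p_def by blast
  have e2: "of_nat (r-a) * t' (a+1) (2*m-1-a) + of_nat (r-(2*m-1-a)) * t' a (2*m-a) = 0"
    using assms(2) h unfolding R0p_def by blast
  have "of_nat (r-a) * (x * t (a+1) (2*m-1-a) - y * t' (a+1) (2*m-1-a)) + of_nat (r-(2*m-1-a)) * (x * t a (2*m-a) - y * t' a (2*m-a))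
     = x * (of_nat (r-a) * t (a+1) (2*m-1-a) + of_nat (r-(2*m-1-a)) * t a (2*m-a))
       - y * (of_nat (r-a) * t' (a+1) (2*m-1-a) + of_nat (r-(2*m-1-a)) * t' a (2*m-a))"
    by (simp add: algebra_simps)
  also have "\<dots> = 0" unfolding e1 e2 by simp
  finally show "of_nat (r-a) * (x * t (a+1) (2*m-1-a) - y * t' (a+1) (2*m-1-a)) + of_nat (r-(2*m-1-a)) * (x * t a (2*m-a) - y * t' a (2*m-a)) = 0" .
qed

lemma uniq_level0:
  assumes "2*m \<le> r" "R0p r m t" "t 0 (2*m) = 0"
  shows "a \<le> 2*m \<Longrightarrow> t a (2*m-a) = 0"
proof (induction a)
  case 0 thus ?case using assms by simp
next
  case (Suc a)
  hence "a < 2*m" by simp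
  hence "of_nat (r-a) * t (a+1) (2*m-1-a) + of_nat (r-(2*m-1-a)) * t a (2*m-a) = 0"
    using assms(2) unfolding R0p_def by blast
  moreover have "t a (2*m-a) = 0" using Suc by simp
  moreover have "r - a \<noteq> 0" using \<open>a < 2*m\<close> assms(1) by simp
  moreover have "2*m-1-a = 2*m - Suc a" by simp
  ultimately show ?case by simp
qed

lemma uniq:
  assumes "2*m \<le> r" "RXp r m n t" "R0p r m t" "t 0 (2*m) = 0"
  shows "a \<le> r \<Longrightarrow> c \<le> r \<Longrightarrow> 2*m \<le> a+c \<Longrightarrow> a+c \<le> 2*m+n \<Longrightarrow> t a c = 0"
proof -
  have "\<forall>a c. a+c = 2*m+s \<longrightarrow> a \<le> r \<longrightarrow> c \<le> r \<longrightarrow> a+c \<le> 2*m+n \<longrightarrow> t a c = 0" for s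
  proof (induction s)
    case 0
    show ?case
    proof (intro allI impI)
      fix a c assume h: "a+c = 2*m+0" "a \<le> r" "c \<le> r" "a+c \<le> 2*m+n"
      hence "c = 2*m-a" "a \<le> 2*m" by auto
      thus "t a c = 0" using uniq_level0[OF assms(1,3,4)] by simp
    qed
  next
    case (Suc s)
    show ?case
    proof (intro allI impI)
      fix a c assume h: "a+c = 2*m+Suc s" "a \<le> r" "c \<le> r" "a+c \<le> 2*m+n"
      have h3: "2*m+1 \<le> a+c" using h by simp
      have e: "of_nat (a+c-2*m) * t a c = of_nat a * t (a-1) c + of_nat c * t a (c-1)"
        using assms(2) h(2,3,4) h3 unfolding RXp_def by blast
      have z1: "of_nat a * t (a-1) c = 0"
      proof (cases "a = 0")
        case False
        have "a-1+c = 2*m+s" "a-1 \<le> r" "a-1+c \<le> 2*m+n" using h False by auto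
        hence "t (a-1) c = 0" using Suc.IH h(3) by blast
        thus ?thesis by simp
      qed simp
      have z2: "of_nat c * t a (c-1) = 0"
      proof (cases "c = 0")
        case False
        have "a+(c-1) = 2*m+s" "c-1 \<le> r" "a+(c-1) \<le> 2*m+n" using h False by auto
        hence "t a (c-1) = 0" using Suc.IH h(2) by blast
        thus ?thesis by simp
      qed simp
      have "a+c-2*m \<noteq> 0" using h by simp
      hence "of_nat (a+c-2*m) \<noteq> (0::complex)" by (metis of_nat_eq_0_iff)
      moreover have "of_nat (a+c-2*m) * t a c = 0" using e[unfolded z1 z2] by (simp only: add_0)
      ultimately show "t a c = 0" by (metis mult_eq_0_iff)
    qed
  qed
  thus "a \<le> r \<Longrightarrow> c \<le> r \<Longrightarrow> 2*m \<le> a+c \<Longrightarrow> a+c \<le> 2*m+n \<Longrightarrow> t a c = 0"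
    by (metis le_add_diff_inverse)
qed

context eqv begin

definition t :: "nat \<Rightarrow> nat \<Rightarrow> complex" where "t a c = bb a c (a+c-2*m)"

lemma tRX: "RXp r m n t"
  unfolding RXp_def
proof (intro allI impI)
  fix a c assume h: "a \<le> r" "c \<le> r" "2*m+1 \<le> a+c" "a+c \<le> 2*m+n"
  define i where "i = a+c-2*m-1"
  have "i < n" "i+1 = a+c-2*m" using h unfolding i_def by auto
  hence e: "of_nat (a+c-2*m) * bb a c (a+c-2*m) = of_nat a * bb (a-1) c i + of_nat c * bb a (c-1) i"
    using EX[OF h(1,2), of i] by simp
  have z1: "of_nat a * bb (a-1) c i = of_nat a * t (a-1) c"
    by (cases "a = 0") (use h in \<open>auto simp: t_def i_def intro!: arg_cong[where f="bb _ _"]\<close>)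
  have z2: "of_nat c * bb a (c-1) i = of_nat c * t a (c-1)"
    by (cases "c = 0") (use h in \<open>auto simp: t_def i_def intro!: arg_cong[where f="bb _ _"]\<close>)
  show "of_nat (a+c-2*m) * t a c = of_nat a * t (a-1) c + of_nat c * t a (c-1)"
    using e[unfolded z1 z2] by (simp only: t_def[of a c])
qed

lemma tR0: "R0p r m t"
  unfolding R0p_def
proof (intro allI impI)
  fix a assume h: "a < 2*m"
  have "0 = of_nat (r-a) * bb (a+1) (2*m-1-a) 0 + of_nat (r-(2*m-1-a)) * bb a (2*m-1-a+1) 0"
    using EY[of a "2*m-1-a" 0] h rm by simp
  moreover have "2*m-1-a+1 = 2*m-a" using h by simp
  moreover have "a+1+(2*m-1-a)-2*m = 0" "a+(2*m-a)-2*m = 0" using h by auto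
  ultimately show "of_nat (r-a) * t (a+1) (2*m-1-a) + of_nat (r-(2*m-1-a)) * t a (2*m-a) = 0"
    unfolding t_def by simp
qed

lemma tRY:
  assumes h: "a \<le> r" "c \<le> r" "2*m \<le> a+c" "a+c-2*m < n"
  shows "of_nat (n-(a+c-2*m)) * t a c = of_nat (r-a) * t (a+1) c + of_nat (r-c) * t a (c+1)"
proof -
  define j where "j = a+c-2*m+1"
  have "1 \<le> j" "j \<le> n" "j - 1 = a+c-2*m" "n+1-j = n-(a+c-2*m)" using h unfolding j_def by auto
  hence "of_nat (n-(a+c-2*m)) * bb a c (a+c-2*m) = of_nat (r-a) * bb (a+1) c j + of_nat (r-c) * bb a (c+1) j"
    using EY[OF h(1,2), of j] by simp
  moreover have "a+1+c-2*m = j" "a+(c+1)-2*m = j" using h j_def by auto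
  ultimately show ?thesis unfolding t_def by simp
qed

lemma tXtop:
  assumes h: "a \<le> r" "c \<le> r" "a+c = 2*m+n+1"
  shows "of_nat a * t (a-1) c + of_nat c * t a (c-1) = 0"
proof -
  have e: "0 = of_nat a * bb (a-1) c n + of_nat c * bb a (c-1) n"
    using EX[OF h(1,2), of n] by simp
  have z1: "of_nat a * bb (a-1) c n = of_nat a * t (a-1) c"
    by (cases "a = 0") (use h in \<open>auto simp: t_def intro!: arg_cong[where f="bb _ _"]\<close>)
  have z2: "of_nat c * bb a (c-1) n = of_nat c * t a (c-1)"
    by (cases "c = 0") (use h in \<open>auto simp: t_def intro!: arg_cong[where f="bb _ _"]\<close>)
  show ?thesis using e[unfolded z1 z2] by simp
qed

definition t2 :: "nat \<Rightarrow> nat \<Rightarrow> complex" where "t2 a c = t (r-a) (r-c)"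

lemma t2RX: "RXp r m n t2"
  unfolding RXp_def
proof (intro allI impI)
  fix a c assume h: "a \<le> r" "c \<le> r" "2*m+1 \<le> a+c" "a+c \<le> 2*m+n"
  have "of_nat (n-((r-a)+(r-c)-2*m)) * t (r-a) (r-c) = of_nat (r-(r-a)) * t (r-a+1) (r-c) + of_nat (r-(r-c)) * t (r-a) (r-c+1)"
    using tRY[of "r-a" "r-c"] h nn by auto
  moreover have "n-((r-a)+(r-c)-2*m) = a+c-2*m" using h nn rm by auto
  moreover have "of_nat (r-(r-a)) * t (r-a+1) (r-c) = of_nat a * t2 (a-1) c"
    by (cases "a = 0") (use h in \<open>auto simp: t2_def intro!: arg_cong2[where f="t"]\<close>)
  moreover have "of_nat (r-(r-c)) * t (r-a) (r-c+1) = of_nat c * t2 a (c-1)"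
    by (cases "c = 0") (use h in \<open>auto simp: t2_def intro!: arg_cong2[where f="t"]\<close>)
  ultimately show "of_nat (a+c-2*m) * t2 a c = of_nat a * t2 (a-1) c + of_nat c * t2 a (c-1)"
    unfolding t2_def by simp
qed

lemma t2R0: "R0p r m t2"
  unfolding R0p_def
proof (intro allI impI)
  fix a assume h: "a < 2*m"
  have "of_nat (r-a) * t (r-a-1) (r-(2*m-1-a)) + of_nat (r-(2*m-1-a)) * t (r-a) (r-(2*m-1-a)-1) = 0"
    using tXtop[of "r-a" "r-(2*m-1-a)"] h rm nn by auto
  moreover have "r-(2*m-1-a)-1 = r-(2*m-a)" "r-a-1 = r-(a+1)" using h rm by auto
  ultimately show "of_nat (r-a) * t2 (a+1) (2*m-1-a) + of_nat (r-(2*m-1-a)) * t2 a (2*m-a) = 0"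
    unfolding t2_def by simp
qed

lemma t_sym_nz:
  assumes h: "a \<le> r" "c \<le> r" "2*m \<le> a+c" "a+c \<le> 2*m+n"
  shows "t a c \<noteq> 0 \<longleftrightarrow> t (r-a) (r-c) \<noteq> 0"
proof -
  have h2: "r-a \<le> r" "r-c \<le> r" "2*m \<le> (r-a)+(r-c)" "(r-a)+(r-c) \<le> 2*m+n" using h nn rm by auto
  show ?thesis
  proof (cases "t 0 (2*m) = 0")
    case True
    thus ?thesis using uniq[OF rm tRX tR0 True] h h2 by auto
  next
    case False
    have b2: "t2 0 (2*m) \<noteq> 0"
    proof
      assume z: "t2 0 (2*m) = 0"
      have "t2 r (r-2*m) = 0" using uniq[OF rm t2RX t2R0 z, of r "r-2*m"] rm nn by auto
      thus False using False rm by (simp add: t2_def)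
    qed
    define t3 where "t3 = (\<lambda>a c. t2 0 (2*m) * t a c - t 0 (2*m) * t2 a c)"
    have "t3 a c = 0" unfolding t3_def
      by (rule uniq[OF rm RXp_lin[OF tRX t2RX] R0p_lin[OF tR0 t2R0]]) (use h in auto)
    hence "t2 0 (2*m) * t a c = t 0 (2*m) * t (r-a) (r-c)" unfolding t3_def t2_def by simp
    thus ?thesis using False b2 by (metis mult_eq_0_iff)
  qed
qed

end


lemma Ypow:
  assumes w: "\<And>i. i \<noteq> 0 \<Longrightarrow> w i = 0"
  shows "k \<le> d \<Longrightarrow> (actY d ^^ k) w = (\<lambda>i. if i = k then w 0 * of_nat (\<Prod>t<k. d - t) else 0)"
proof (induction k)
  case 0 thus ?case using w by auto
next
  case (Suc k)
  hence IH: "(actY d ^^ k) w = (\<lambda>i. if i = k then w 0 * of_nat (\<Prod>t<k. d - t) else 0)" by simp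
  show ?case
  proof (rule ext)
    fix i
    have "(actY d ^^ Suc k) w i = actY d ((actY d ^^ k) w) i" by simp
    also have "\<dots> = (if i = Suc k then w 0 * of_nat (\<Prod>t<Suc k. d - t) else 0)"
      unfolding IH actY_def using Suc.prems by (auto simp: of_nat_diff algebra_simps)
    finally show "(actY d ^^ Suc k) w i = (if i = Suc k then w 0 * of_nat (\<Prod>t<Suc k. d - t) else 0)" .
  qed
qed

locale eqv2 = eqv +
  fixes w0 :: "nat \<Rightarrow> complex" and q :: "nat \<Rightarrow> (nat \<Rightarrow> complex) \<Rightarrow> (nat \<Rightarrow> complex) \<Rightarrow> complex"
  assumes hw: "highest_weight_vector n w0"
    and qB: "\<forall>u\<in>symp r. \<forall>v\<in>symp r. B u v = (\<lambda>i. \<Sum>k\<le>n. q k u v * wvec n w0 k i)"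
begin

lemma w0z: "i \<noteq> 0 \<Longrightarrow> w0 i = 0"
proof -
  assume i: "i \<noteq> 0"
  show "w0 i = 0"
  proof (cases "i \<le> n")
    case True
    have "actX n w0 (i-1) = 0" using hw unfolding highest_weight_vector_def by simp
    moreover have "i - 1 + 1 = i" "i - 1 < n" using True i by auto
    ultimately show ?thesis by (simp add: actX_def)
  next
    case False thus ?thesis using hw unfolding highest_weight_vector_def symp_def by auto
  qed
qed

lemma w00: "w0 0 \<noteq> 0"
proof
  assume "w0 0 = 0"
  hence "w0 = (\<lambda>_. 0)" using w0z by (metis ext)
  thus False using hw unfolding highest_weight_vector_def by simp
qed

definition om :: "nat \<Rightarrow> complex" where
  "om k = w0 0 * of_nat (\<Prod>t<k. n - t) / of_nat (fact k)"

lemma om_nz: "k \<le> n \<Longrightarrow> om k \<noteq> 0"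
  unfolding om_def using w00 by (auto simp: prod_zero_iff)

lemma wv: "k \<le> n \<Longrightarrow> wvec n w0 k i = (if i = k then om k else 0)"
  unfolding wvec_def om_def using Ypow[of w0, OF w0z] by auto

lemma bbq: assumes "a \<le> r" "c \<le> r" "i \<le> n" shows "bb a c i = q i (ebasis a) (ebasis c) * om i"
proof -
  have "bb a c i = (\<Sum>k\<le>n. q k (ebasis a) (ebasis c) * wvec n w0 k i)"
    using qB eb assms by (simp add: bb_def)
  also have "\<dots> = (\<Sum>k\<le>n. if k = i then q k (ebasis a) (ebasis c) * om k else 0)"
    by (rule sum.cong) (auto simp: wv)
  also have "\<dots> = q i (ebasis a) (ebasis c) * om i" using assms by simp
  finally show ?thesis .
qed

definition Jk :: "nat \<Rightarrow> nat set" where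
  "Jk k = {c. c \<le> r \<and> (\<exists>a\<le>r. a + c = k + 2*m \<and> t a c \<noteq> 0)}"

lemma qnz: assumes "a \<le> r" "c \<le> r" "k \<le> n"
  shows "q k (ebasis a) (ebasis c) \<noteq> 0 \<longleftrightarrow> a + c = k + 2*m \<and> t a c \<noteq> 0"
proof -
  have "q k (ebasis a) (ebasis c) \<noteq> 0 \<longleftrightarrow> bb a c k \<noteq> 0"
    using bbq[OF assms] om_nz[OF assms(3)] by simp
  also have "\<dots> \<longleftrightarrow> a + c = k + 2*m \<and> t a c \<noteq> 0"
    using EH[OF assms(1,2)] unfolding t_def by auto
  finally show ?thesis .
qed

lemma rank_Jk: assumes "k \<le> n" shows "bilin_rank r (q k) = card (Jk k)"
proof -
  let ?A = "mat (r + 1) (r + 1) (\<lambda>(i, j). q k (ebasis i) (ebasis j))"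
  have "vec_space.rank (r+1) ?A = card {j. j<r+1 \<and> (\<exists>i<r+1. ?A$$(i,j) \<noteq> 0)}"
  proof (rule vec_space.rank_sparse)
    show "?A \<in> carrier_mat (r+1) (r+1)" by simp
    fix i j j' assume h: "i < r+1" "j < r+1" "j' < r+1" "?A$$(i,j) \<noteq> 0" "?A$$(i,j') \<noteq> 0"
    thus "j = j'" using qnz[of i j k] qnz[of i j' k] assms by auto
  qed
  also have "{j. j<r+1 \<and> (\<exists>i<r+1. ?A$$(i,j) \<noteq> 0)} = {j. j \<le> r \<and> (\<exists>i\<le>r. q k (ebasis i) (ebasis j) \<noteq> 0)}"
    by (auto simp: less_Suc_eq_le)
  also have "\<dots> = Jk k"
    unfolding Jk_def using qnz assms by blast
  finally show ?thesis unfolding bilin_rank_def .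
qed

lemma Jk_bound: "card (Jk k) \<le> 2*m + k + 1"
proof -
  have "Jk k \<subseteq> {..k+2*m}" unfolding Jk_def by auto
  hence "card (Jk k) \<le> card {..k+2*m}" by (rule card_mono[rotated]) simp
  thus ?thesis by simp
qed

lemma Jk_mirror: assumes "k \<le> n" shows "card (Jk (n-k)) = card (Jk k)"
proof -
  have "Jk k = (\<lambda>c. r - c) ` Jk (n-k)"
  proof
    show "Jk k \<subseteq> (\<lambda>c. r - c) ` Jk (n-k)"
    proof
      fix c assume "c \<in> Jk k"
      then obtain a where h: "c \<le> r" "a \<le> r" "a + c = k + 2*m" "t a c \<noteq> 0" unfolding Jk_def by auto
      have "t (r-a) (r-c) \<noteq> 0" using t_sym_nz[of a c] h assms by auto
      moreover have "(r-a) + (r-c) = (n-k) + 2*m" using h assms nn rm by auto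
      ultimately have "r - c \<in> Jk (n-k)" unfolding Jk_def by (auto intro!: exI[of _ "r-a"])
      moreover have "c = r - (r - c)" using h by simp
      ultimately show "c \<in> (\<lambda>c. r - c) ` Jk (n-k)" by blast
    qed
    show "(\<lambda>c. r - c) ` Jk (n-k) \<subseteq> Jk k"
    proof
      fix x assume "x \<in> (\<lambda>c. r - c) ` Jk (n-k)"
      then obtain c a where h: "x = r - c" "c \<le> r" "a \<le> r" "a + c = (n-k) + 2*m" "t a c \<noteq> 0" unfolding Jk_def by auto
      have "t (r-a) (r-c) \<noteq> 0" using t_sym_nz[of a c] h assms nn rm by auto
      moreover have "(r-a) + (r-c) = k + 2*m" using h assms nn rm by auto
      ultimately show "x \<in> Jk k" unfolding Jk_def using h by (auto intro!: exI[of _ "r-a"])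
    qed
  qed
  moreover have "inj_on (\<lambda>c. r - c) (Jk (n-k))" unfolding Jk_def by (rule inj_onI) auto
  ultimately show ?thesis by (simp add: card_image)
qed

end

theorem mainTheorem5:
  fixes r m n :: nat
    and B :: "(nat \<Rightarrow> complex) \<Rightarrow> (nat \<Rightarrow> complex) \<Rightarrow> (nat \<Rightarrow> complex)"
    and w0 :: "nat \<Rightarrow> complex"
    and q :: "nat \<Rightarrow> (nat \<Rightarrow> complex) \<Rightarrow> (nat \<Rightarrow> complex) \<Rightarrow> complex"
  assumes "r \<ge> 2"
    and "2 * m \<le> r"
    and "n = 2 * r - 4 * m"
    and "equivariant_sym_bilinear r n B"
    and "highest_weight_vector n w0"
    and "\<forall>u\<in>symp r. \<forall>v\<in>symp r.
           B u v = (\<lambda>i. \<Sum>k\<le>n. q k u v * wvec n w0 k i)"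
  shows "\<forall>k. 2 * k \<le> n \<longrightarrow>
           bilin_rank r (q k) = bilin_rank r (q (n - k)) \<and>
           bilin_rank r (q k) \<le> 2 * m + k + 1"
proof -
  interpret eqv2 r m n B w0 q
    using assms by unfold_locales auto
  show ?thesis
  proof (intro allI impI)
    fix k assume k: "2 * k \<le> n"
    hence k1: "k \<le> n" "n - k \<le> n" by auto
    show "bilin_rank r (q k) = bilin_rank r (q (n - k)) \<and> bilin_rank r (q k) \<le> 2 * m + k + 1"
      using rank_Jk[OF k1(1)] rank_Jk[OF k1(2)] Jk_mirror[OF k1(1)] Jk_bound[of k] by simp
  qed
qed

end
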